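(* Consider Algorithm iR2N (described in the context) and suppose (A1)–(A7) hold. Then there exist an infinite index set $N\subseteq\mathbb{N}$ and, for each $k\in N$, an exact Cauchy step $s_{k,\mathrm{cp}}\in\operatorname{argmin}_s m_{\mathrm{cp}}(s;x_k,\nu_k^{-1})$ such that: (i) $\{\hat s_{k,\mathrm{cp}}\}_{k\in N}\to0$ and $\{s_{k,\mathrm{cp}}\}_{k\in N}\to0$; (ii) $\{s_k\}_{k\in N}\to0$; (iii) there exist $u_k\in\nabla f(x_k)+\partial\psi(s_{k,\mathrm{cp}};x_k)$, $k\in N$, with $\{u_k\}_{k\in N}\to0$.
   Context: Setting. $f:\mathbb{R}^n\to\mathbb{R}$ is continuously differentiable, $h:\mathbb{R}^n\to\mathbb{R}\cup\{+\infty\}$ is proper and lower semicontinuous; the problem is $\min_x f(x)+h(x)$. $\|\cdot\|$ is the Euclidean norm (spectral norm for matrices). For each $x$, approximations $\hat f(x)\in\mathbb{R}$ of $f(x)$ and $\hat\nabla f(x)\in\mathbb{R}^n$ of $\nabla f(x)$ are available. For each $x$, $\psi(\cdot;x):\mathbb{R}^n\to\mathbb{R}\cup\{+\infty\}$ is proper, lsc, satisfies $\psi(0;x)=h(x)$ and $\partial\psi(0;x)\subseteq\partial h(x)$ ($\partial$ = limiting subdifferential), and is uniformly prox-bounded: there is $\lambda>0$ such that for every $x$ and every $0<\lambda'<\lambda$, $w\mapsto\psi(w;x)+\tfrac{1}{2\lambda'}\|w\|^2$ is bounded below. Models: $\varphi_{\mathrm{cp}}(s;x)=\hat f(x)+\hat\nabla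 f(x)^Ts$; $m_{\mathrm{cp}}(s;x,\nu^{-1})=\varphi_{\mathrm{cp}}(s;x)+\tfrac12\nu^{-1}\|s\|^2+\psi(s;x)$; for a symmetric $B(x)\in\mathbb{R}^{n\times n}$, $\varphi(s;x)=\hat f(x)+\hat\nabla f(x)^Ts+\tfrac12 s^TB(x)s$ and $m(s;x,\sigma)=\varphi(s;x)+\tfrac12\sigma\|s\|^2+\psi(s;x)$. Algorithm iR2N. Constants: $\kappa_f,\kappa_\nabla>0$, $0<\gamma_3\le 1<\gamma_1\le\gamma_2$, $0<\hat\eta_1\le\hat\eta_2<1$, $0<\theta_1<1<\theta_2$, $\sigma_{\min}>4\kappa_f\theta_1\theta_2^2/(\hat\eta_1(1-\theta_1))$, $\sigma_0\ge\sigma_{\min}$, $x_0\in\mathbb{R}^n$. At iteration $k=0,1,\dots$: choose symmetric $B_k=B(x_k)$; set $\nu_k=\theta_1/(\|B_k\|+\sigma_k)$; compute $\hat s_{k,\mathrm{cp}}$ with $m_{\mathrm{cp}}(\hat s_{k,\mathrm{cp}};x_k,\nu_k^{-1})\le m_{\mathrm{cp}}(0;x_k,\nu_k^{-1})$ (an approximate minimizer of $m_{\mathrm{cp}}(\cdot;x_k,\nu_k^{-1})$ obtained by a descent procedure from $s=0$) and set $\hat\xi_{k,\mathrm{cp}}=(\varphi_{\mathrm{cp}}+\psi)(0;x_k)-(\varphi_{\mathrm{cp}}+\psi)(\hat s_{k,\mathrm{cp}};x_k)$; compute $s_k$ with $m(s_k;x_k,\sigma_k)\le m(\hat s_{k,\mathrm{cp}};x_k,\sigma_k)$;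 if $\|s_k\|>\theta_2\|\hat s_{k,\mathrm{cp}}\|$, reset $s_k=\hat s_{k,\mathrm{cp}}$ (these computations are repeated with refined $\hat f,\hat\nabla f$ until (A6) holds). Compute $$\hat\rho_k=\frac{\hat f(x_k)+h(x_k)-\hat f(x_k+s_k)-h(x_k+s_k)}{\varphi(0;x_k)+\psi(0;x_k)-\varphi(s_k;x_k)-\psi(s_k;x_k)},$$ where $\varphi(\cdot;x_k)$ uses $B_k$. If $\hat\rho_k\ge\hat\eta_1$ set $x_{k+1}=x_k+s_k$, else $x_{k+1}=x_k$. Choose $\sigma_{k+1}\in[\gamma_3\sigma_k,\sigma_k]$ if $\hat\rho_k\ge\hat\eta_2$, $\sigma_{k+1}\in[\sigma_k,\gamma_1\sigma_k]$ if $\hat\eta_1\le\hat\rho_k<\hat\eta_2$, $\sigma_{k+1}\in[\gamma_1\sigma_k,\gamma_2\sigma_k]$ if $\hat\rho_k<\hat\eta_1$; then reset $\sigma_{k+1}=\max(\sigma_{k+1},\sigma_{\min})$. Assumptions. (A1) $|f(x+s)-f(x)-\nabla f(x)^Ts|\le\tfrac12L\|s\|^2$ for all $x,s$, for some $L\ge0$. (A2) $\|B_k\|\le\kappa_B$ for all $k$, for some $\kappa_B>0$. (A3) $|\psi(s;x)-h(x+s)|\le\kappa_h\|s\|^2$ for all $x,s$, for some $\kappa_h>0$. (A4) For all $k$, $\varphi(0;x_k)+\psi(0;x_k)-(\varphi(s_k;x_k)+\psi(s_k;x_k))\ge(1-\theta_1)\hat\xi_{k,\mathrm{cp}}$. (A5)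 There is $\kappa_s\in(0,1]$ such that for all $k$ the set $\operatorname{argmin}_s m_{\mathrm{cp}}(s;x_k,\nu_k^{-1})$ is nonempty and $\|\hat s_{k,\mathrm{cp}}\|\ge\kappa_s\min\{\|s\|\mid s\in\operatorname{argmin}_{s'} m_{\mathrm{cp}}(s';x_k,\nu_k^{-1})\}$. (A6) For all $k$: $|f(x_k)-\hat f(x_k)|\le\kappa_f\|s_k\|^2$, $|f(x_k+s_k)-\hat f(x_k+s_k)|\le\kappa_f\|s_k\|^2$, $\|\nabla f(x_k)-\hat\nabla f(x_k)\|\le\kappa_\nabla\|s_k\|$. (A7) There is $(f+h)_{\mathrm{low}}\in\mathbb{R}$ with $(f+h)(x)\ge(f+h)_{\mathrm{low}}$ for all $x$. *)

theory Defs
  imports "HOL-Analysis.Analysis" "HOL-Library.Extended_Real"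
begin

definition proper_fun :: "('a \<Rightarrow> ereal) \<Rightarrow> bool" where
  "proper_fun g \<longleftrightarrow> (\<forall>x. g x \<noteq> -\<infinity>) \<and> (\<exists>x. g x \<noteq> \<infinity>)"

definition lsc_fun :: "('a::topological_space \<Rightarrow> ereal) \<Rightarrow> bool" where
  "lsc_fun g \<longleftrightarrow> (\<forall>c::ereal. closed {x. g x \<le> c})"

definition frechet_subdiff :: "('a::real_inner \<Rightarrow> ereal) \<Rightarrow> 'a \<Rightarrow> 'a set" where
  "frechet_subdiff g x = {v. \<bar>g x\<bar> \<noteq> \<infinity> \<and>
     (\<forall>e>0. \<exists>d>0. \<forall>y. norm (y - x) < d \<longrightarrow>
        g x + ereal (inner v (y - x) - e * norm (y - x)) \<le> g y)}"

definition limiting_subdiff :: "('a::real_inner \<Rightarrow> ereal) \<Rightarrow> 'a \<Rightarrow> 'a set" where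
  "limiting_subdiff g x = {v. \<bar>g x\<bar> \<noteq> \<infinity> \<and>
     (\<exists>xs vs. xs \<longlonglongrightarrow> x \<and> (\<lambda>j. g (xs j)) \<longlonglongrightarrow> g x \<and>
        (\<forall>j. vs j \<in> frechet_subdiff g (xs j)) \<and> vs \<longlonglongrightarrow> v)}"

definition argmin_set :: "('a \<Rightarrow> ereal) \<Rightarrow> 'a set" where
  "argmin_set F = {s. \<forall>t. F s \<le> F t}"

definition spec_norm :: "real^'n^'n \<Rightarrow> real" where
  "spec_norm B = onorm (\<lambda>v. B *v v)"

definition phi_cp :: "real \<Rightarrow> real^'n \<Rightarrow> real^'n \<Rightarrow> real" where
  "phi_cp fh g s = fh + inner g s"

definition m_cp :: "real \<Rightarrow> real^'n \<Rightarrow> (real^'n \<Rightarrow> ereal) \<Rightarrow> real \<Rightarrow> real^'n \<Rightarrow> ereal" where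
  "m_cp fh g ps nuinv s = ereal (phi_cp fh g s + (1/2) * nuinv * (norm s)\<^sup>2) + ps s"

definition phi_m :: "real \<Rightarrow> real^'n \<Rightarrow> real^'n^'n \<Rightarrow> real^'n \<Rightarrow> real" where
  "phi_m fh g B s = fh + inner g s + (1/2) * inner s (B *v s)"

definition m_model :: "real \<Rightarrow> real^'n \<Rightarrow> real^'n^'n \<Rightarrow> (real^'n \<Rightarrow> ereal) \<Rightarrow> real \<Rightarrow> real^'n \<Rightarrow> ereal" where
  "m_model fh g B ps sg s = ereal (phi_m fh g B s + (1/2) * sg * (norm s)\<^sup>2) + ps s"

definition ratio :: "ereal \<Rightarrow> ereal \<Rightarrow> real" where
  "ratio a b = real_of_ereal a / real_of_ereal b"

end

theory Submission
  imports Defs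
begin

lemma select_subseq:
  fixes Q :: "nat \<Rightarrow> real"
  assumes "\<And>e K. e > 0 \<Longrightarrow> \<exists>k\<ge>K. Q k < e"
  shows "\<exists>N. infinite N \<and> (\<forall>e>0. \<exists>K. \<forall>k\<in>N. k \<ge> K \<longrightarrow> Q k < e)"
proof -
  define g where "g j = (SOME k. k \<ge> j \<and> Q k < 1 / (real j + 1))" for j
  have g: "g j \<ge> j \<and> Q (g j) < 1 / (real j + 1)" for j
    unfolding g_def by (rule someI_ex) (use assms in auto)
  have inf: "infinite (range g)"
    unfolding infinite_nat_iff_unbounded_le using g by blast
  moreover have "\<exists>K. \<forall>k\<in>range g. k \<ge> K \<longrightarrow> Q k < e" if e: "e > 0" for e
  proof -
    obtain J :: nat where J0: "inverse (real (Suc J)) < e"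
      using e reals_Archimedean by blast
    then have J: "1 / (real J + 1) < e" by (simp add: inverse_eq_divide add.commute)
    define K where "K = Suc (Max (g ` {..<J}))"
    have "Q k < e" if kin: "k \<in> range g" and kK: "k \<ge> K" for k
    proof -
      obtain j where kj: "k = g j" using kin by auto
      have "j \<ge> J"
      proof (rule ccontr)
        assume "\<not> J \<le> j"
        then have "g j \<le> Max (g ` {..<J})" by (intro Max_ge) auto
        then show False using kK kj K_def by simp
      qed
      then have "1 / (real j + 1) \<le> 1 / (real J + 1)" by (simp add: frac_le)
      then show ?thesis using g[of j] kj J by auto
    qed
    then show ?thesis by blast
  qed
  ultimately show ?thesis by blast
qed

lemma argmin_subdiff:
  fixes g s :: "real^'n" and ps :: "real^'n \<Rightarrow> ereal" and a c :: real
  assumes a: "a > 0"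
    and mn: "\<And>t. ereal (c + inner g s + 1/2 * a * (norm s)\<^sup>2) + ps s
                 \<le> ereal (c + inner g t + 1/2 * a * (norm t)\<^sup>2) + ps t"
    and p: "ps s = ereal p"
  shows "- g - a *\<^sub>R s \<in> limiting_subdiff ps s"
proof -
  have fr: "- g - a *\<^sub>R s \<in> frechet_subdiff ps s"
    unfolding frechet_subdiff_def
  proof (intro CollectI conjI allI impI)
    show "\<bar>ps s\<bar> \<noteq> \<infinity>" using p by simp
    fix e :: real assume e: "e > 0"
    show "\<exists>d>0. \<forall>y. norm (y - s) < d \<longrightarrow>
        ps s + ereal (inner (- g - a *\<^sub>R s) (y - s) - e * norm (y - s)) \<le> ps y"
    proof (intro exI conjI allI impI)
      show "2 * e / a > 0" using a e by simp
      fix y assume y: "norm (y - s) < 2 * e / a"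
      show "ps s + ereal (inner (- g - a *\<^sub>R s) (y - s) - e * norm (y - s)) \<le> ps y"
      proof (cases "ps y")
        case (real q)
        have m: "c + inner g s + 1/2 * a * (norm s)\<^sup>2 + p \<le> c + inner g y + 1/2 * a * (norm y)\<^sup>2 + q"
          using mn[of y] p real by simp
        have ny: "(norm y)\<^sup>2 = (norm s)\<^sup>2 + 2 * inner s (y - s) + (norm (y - s))\<^sup>2"
          by (simp add: power2_norm_eq_inner inner_diff inner_commute algebra_simps)
        have "a * (norm (y - s))\<^sup>2 \<le> 2 * e * norm (y - s)"
        proof -
          have "a * norm (y - s) \<le> 2 * e" using y a by (simp add: field_simps)
          then have "a * norm (y - s) * norm (y - s) \<le> 2 * e * norm (y - s)"
            by (simp add: mult_right_mono)
          then show ?thesis by (simp add: power2_eq_square mult.assoc)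
        qed
        then have "p + (inner (- g - a *\<^sub>R s) (y - s) - e * norm (y - s)) \<le> q"
          using m ny by (simp add: inner_diff_left inner_diff_right algebra_simps)
        then show ?thesis using p real by simp
      qed (use p mn[of y] in auto)
    qed
  qed
  show ?thesis unfolding limiting_subdiff_def
    using p fr by (intro CollectI conjI exI[of _ "\<lambda>_. s"] exI[of _ "\<lambda>_. - g - a *\<^sub>R s"]) auto
qed

lemma tendsto_from_Q:
  fixes v :: "nat \<Rightarrow> 'a::real_normed_vector"
  assumes Q: "\<forall>e>0. \<exists>K. \<forall>k\<in>N. k \<ge> K \<longrightarrow> Q k < e"
    and le: "\<And>k. norm (v k) \<le> Q k"
  shows "(v \<longlongrightarrow> 0) (inf sequentially (principal N))"
proof (rule tendstoI)
  fix e :: real assume "e > 0"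
  then obtain K where K: "\<forall>k\<in>N. k \<ge> K \<longrightarrow> Q k < e" using Q by blast
  show "\<forall>\<^sub>F k in inf sequentially (principal N). dist (v k) 0 < e"
    unfolding eventually_inf_principal eventually_sequentially
  proof (intro exI[of _ K] allI impI)
    fix k assume "K \<le> k" "k \<in> N"
    then have "Q k < e" using K by blast
    then show "dist (v k) 0 < e" using le[of k] by simp
  qed
qed

lemma ereal_fin_eq: "(x::ereal) \<noteq> \<infinity> \<Longrightarrow> x \<noteq> -\<infinity> \<Longrightarrow> x = ereal (real_of_ereal x)"
  by (cases x) auto

theorem lemma3p9:
  fixes f :: "real^'n \<Rightarrow> real" and gradf :: "real^'n \<Rightarrow> real^'n"
    and h :: "real^'n \<Rightarrow> ereal" and psi :: "real^'n \<Rightarrow> real^'n \<Rightarrow> ereal"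
    and Bf :: "real^'n \<Rightarrow> real^'n^'n"
    and x :: "nat \<Rightarrow> real^'n" and sigma nu rho :: "nat \<Rightarrow> real"
    and fh0 fh1 :: "nat \<Rightarrow> real" and gh :: "nat \<Rightarrow> real^'n"
    and shcp s :: "nat \<Rightarrow> real^'n" and xicp :: "nat \<Rightarrow> ereal"
    and kf kg gam1 gam2 gam3 eta1 eta2 th1 th2 sigmin :: real
  assumes f_grad: "\<And>y. (f has_derivative (\<lambda>v. inner (gradf y) v)) (at y)"
    and f_C1: "continuous_on UNIV gradf"
    and h_proper: "proper_fun h" and h_lsc: "lsc_fun h"
    and psi_proper: "\<And>y. proper_fun (psi y)" and psi_lsc: "\<And>y. lsc_fun (psi y)"
    and psi_0: "\<And>y. psi y 0 = h y"
    and psi_subdiff: "\<And>y. limiting_subdiff (psi y) 0 \<subseteq> limiting_subdiff h y"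
    and psi_prox: "\<exists>lam>0. \<forall>y lam'. 0 < lam' \<and> lam' < lam \<longrightarrow>
                     (\<exists>c. \<forall>w. ereal c \<le> psi y w + ereal ((norm w)\<^sup>2 / (2 * lam')))"
    and B_sym: "\<And>y. transpose (Bf y) = Bf y"
    and params: "kf > 0" "kg > 0" "0 < gam3" "gam3 \<le> 1" "1 < gam1" "gam1 \<le> gam2"
      "0 < eta1" "eta1 \<le> eta2" "eta2 < 1" "0 < th1" "th1 < 1" "1 < th2"
      "sigmin > 4 * kf * th1 * th2\<^sup>2 / (eta1 * (1 - th1))" "sigma 0 \<ge> sigmin"
    and x0_dom: "h (x 0) \<noteq> \<infinity>"
    and nu_def: "\<And>k. nu k = th1 / (spec_norm (Bf (x k)) + sigma k)"
    and cauchy_descent: "\<And>k. m_cp (fh0 k) (gh k) (psi (x k)) (1 / nu k) (shcp k)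
                               \<le> m_cp (fh0 k) (gh k) (psi (x k)) (1 / nu k) 0"
    and xicp_def: "\<And>k. xicp k = (ereal (phi_cp (fh0 k) (gh k) 0) + psi (x k) 0)
                               - (ereal (phi_cp (fh0 k) (gh k) (shcp k)) + psi (x k) (shcp k))"
    and step: "\<And>k. \<exists>t. m_model (fh0 k) (gh k) (Bf (x k)) (psi (x k)) (sigma k) t
                          \<le> m_model (fh0 k) (gh k) (Bf (x k)) (psi (x k)) (sigma k) (shcp k)
                     \<and> s k = (if norm t > th2 * norm (shcp k) then shcp k else t)"
    and rho_def: "\<And>k. rho k = ratio
         (ereal (fh0 k) + h (x k) - ereal (fh1 k) - h (x k + s k))
         (ereal (phi_m (fh0 k) (gh k) (Bf (x k)) 0) + psi (x k) 0
            - (ereal (phi_m (fh0 k) (gh k) (Bf (x k)) (s k)) + psi (x k) (s k)))"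
    and x_update: "\<And>k. x (Suc k) = (if rho k \<ge> eta1 then x k + s k else x k)"
    and sigma_update: "\<And>k. \<exists>sg.
         (rho k \<ge> eta2 \<longrightarrow> gam3 * sigma k \<le> sg \<and> sg \<le> sigma k)
       \<and> (eta1 \<le> rho k \<and> rho k < eta2 \<longrightarrow> sigma k \<le> sg \<and> sg \<le> gam1 * sigma k)
       \<and> (rho k < eta1 \<longrightarrow> gam1 * sigma k \<le> sg \<and> sg \<le> gam2 * sigma k)
       \<and> sigma (Suc k) = max sg sigmin"
    and A1: "\<exists>L\<ge>0. \<forall>y v. \<bar>f (y + v) - f y - inner (gradf y) v\<bar> \<le> L / 2 * (norm v)\<^sup>2"
    and A2: "\<exists>kB>0. \<forall>k. spec_norm (Bf (x k)) \<le> kB"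
    and A3: "\<exists>kh>0. \<forall>y v. (psi y v = \<infinity> \<longleftrightarrow> h (y + v) = \<infinity>) \<and>
               (psi y v \<noteq> \<infinity> \<longrightarrow>
                  \<bar>real_of_ereal (psi y v) - real_of_ereal (h (y + v))\<bar> \<le> kh * (norm v)\<^sup>2)"
    and A4: "\<And>k. ereal (phi_m (fh0 k) (gh k) (Bf (x k)) 0) + psi (x k) 0
               - (ereal (phi_m (fh0 k) (gh k) (Bf (x k)) (s k)) + psi (x k) (s k))
             \<ge> ereal (1 - th1) * xicp k"
    and A5: "\<exists>ks. 0 < ks \<and> ks \<le> 1 \<and> (\<forall>k.
               argmin_set (m_cp (fh0 k) (gh k) (psi (x k)) (1 / nu k)) \<noteq> {} \<and>
               norm (shcp k) \<ge> ks * Inf (norm ` argmin_set (m_cp (fh0 k) (gh k) (psi (x k)) (1 / nu k))))"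
    and A6: "\<And>k. \<bar>f (x k) - fh0 k\<bar> \<le> kf * (norm (s k))\<^sup>2"
            "\<And>k. \<bar>f (x k + s k) - fh1 k\<bar> \<le> kf * (norm (s k))\<^sup>2"
            "\<And>k. norm (gradf (x k) - gh k) \<le> kg * norm (s k)"
    and A7: "\<exists>low. \<forall>y. ereal low \<le> ereal (f y) + h y"
  shows "\<exists>N. infinite N \<and> (\<exists>scp u.
           (\<forall>k\<in>N. scp k \<in> argmin_set (m_cp (fh0 k) (gh k) (psi (x k)) (1 / nu k))
                  \<and> u k \<in> (\<lambda>w. gradf (x k) + w) ` limiting_subdiff (psi (x k)) (scp k))
         \<and> (shcp \<longlongrightarrow> 0) (inf sequentially (principal N))
         \<and> (scp \<longlongrightarrow> 0) (inf sequentially (principal N))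
         \<and> (s \<longlongrightarrow> 0) (inf sequentially (principal N))
         \<and> (u \<longlongrightarrow> 0) (inf sequentially (principal N)))"
proof -
  obtain L where L0: "L \<ge> 0" and Lf: "\<And>y v. \<bar>f (y + v) - f y - inner (gradf y) v\<bar> \<le> L / 2 * (norm v)\<^sup>2"
    using A1 by blast
  obtain kB where kB0: "kB > 0" and kB: "\<And>k. spec_norm (Bf (x k)) \<le> kB" using A2 by blast
  obtain kh where kh0: "kh > 0" and khinf: "\<And>y v. psi y v = \<infinity> \<longleftrightarrow> h (y + v) = \<infinity>"
    and khb: "\<And>y v. psi y v \<noteq> \<infinity> \<Longrightarrow>
       \<bar>real_of_ereal (psi y v) - real_of_ereal (h (y + v))\<bar> \<le> kh * (norm v)\<^sup>2"
    using A3 by blast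
  obtain ks where ks0: "0 < ks" "ks \<le> 1"
    and ksne: "\<And>k. argmin_set (m_cp (fh0 k) (gh k) (psi (x k)) (1 / nu k)) \<noteq> {}"
    and ksb: "\<And>k. norm (shcp k) \<ge> ks * Inf (norm ` argmin_set (m_cp (fh0 k) (gh k) (psi (x k)) (1 / nu k)))"
    using A5 by blast
  obtain low where low: "\<And>y. ereal low \<le> ereal (f y) + h y" using A7 by blast
  have hninf: "\<And>y. h y \<noteq> -\<infinity>" using h_proper unfolding proper_fun_def by blast
  have psininf: "\<And>y v. psi y v \<noteq> -\<infinity>" using psi_proper unfolding proper_fun_def by blast
  have sigmin0: "sigmin > 0"
  proof -
    have "4 * kf * th1 * th2\<^sup>2 / (eta1 * (1 - th1)) > 0" using params by simp
    then show ?thesis using params(13) by linarith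
  qed
  have sig_ge: "\<And>k. sigma k \<ge> sigmin"
  proof -
    fix k show "sigma k \<ge> sigmin"
    proof (cases k)
      case 0 then show ?thesis using params(14) by simp
    next
      case (Suc j)
      obtain sg where "sigma (Suc j) = max sg sigmin" using sigma_update[of j] by blast
      then show ?thesis using Suc by simp
    qed
  qed
  have sn0: "\<And>k. spec_norm (Bf (x k)) \<ge> 0"
    unfolding spec_norm_def by (rule onorm_pos_le) simp
  have Bbound: "\<And>k v. \<bar>inner v (Bf (x k) *v v)\<bar> \<le> kB * (norm v)\<^sup>2"
  proof -
    fix k v
    have "\<bar>inner v (Bf (x k) *v v)\<bar> \<le> norm v * norm (Bf (x k) *v v)" by (rule Cauchy_Schwarz_ineq2)
    also have "norm (Bf (x k) *v v) \<le> spec_norm (Bf (x k)) * norm v"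
      unfolding spec_norm_def by (rule onorm) simp
    then have "norm v * norm (Bf (x k) *v v) \<le> norm v * (kB * norm v)"
      using kB[of k] by (meson mult_left_mono mult_right_mono norm_ge_zero order_trans)
    finally show "\<bar>inner v (Bf (x k) *v v)\<bar> \<le> kB * (norm v)\<^sup>2" by (simp add: power2_eq_square algebra_simps)
  qed
  have invnu: "\<And>k. 1 / nu k = (spec_norm (Bf (x k)) + sigma k) / th1"
    using nu_def by simp
  have nu_pos: "\<And>k. nu k > 0"
  proof -
    fix k
    have "spec_norm (Bf (x k)) + sigma k > 0" using sn0[of k] sig_ge[of k] sigmin0 by linarith
    then show "nu k > 0" using nu_def[of k] params(10) by simp
  qed
  have invnu_ge: "\<And>k. 1 / nu k \<ge> sigma k / th1"
    using invnu sn0 params by (simp add: divide_right_mono)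
  have invnu_le: "\<And>k. 1 / nu k \<le> (kB + sigma k) / th1"
    using invnu kB params by (simp add: divide_right_mono)
  have s_le: "\<And>k. norm (s k) \<le> th2 * norm (shcp k)"
  proof -
    fix k
    obtain t where t: "s k = (if norm t > th2 * norm (shcp k) then shcp k else t)" using step[of k] by blast
    have "norm (shcp k) \<le> th2 * norm (shcp k)" using params by (simp add: mult_le_cancel_right1)
    then show "norm (s k) \<le> th2 * norm (shcp k)" using t by (auto split: if_splits)
  qed
  have fin_step: "psi (x k) (shcp k) \<noteq> \<infinity> \<and> psi (x k) (s k) \<noteq> \<infinity>" if hk: "h (x k) \<noteq> \<infinity>" for k
  proof -
    obtain hv where hv: "h (x k) = ereal hv" using hk hninf by (cases "h (x k)") auto
    have p0: "psi (x k) 0 = ereal hv" using psi_0 hv by simp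
    have cd: "ereal (fh0 k + inner (gh k) (shcp k) + 1/2 * (1 / nu k) * (norm (shcp k))\<^sup>2) + psi (x k) (shcp k)
        \<le> ereal (fh0 k) + ereal hv"
      using cauchy_descent[of k] p0 unfolding m_cp_def phi_cp_def by simp
    have c1: "psi (x k) (shcp k) \<noteq> \<infinity>"
    proof
      assume "psi (x k) (shcp k) = \<infinity>" then show False using cd by simp
    qed
    then obtain pv where pv: "psi (x k) (shcp k) = ereal pv" using psininf by (cases "psi (x k) (shcp k)") auto
    have xi: "xicp k = ereal (hv - inner (gh k) (shcp k) - pv)"
      using xicp_def[of k] p0 pv unfolding phi_cp_def by simp
    have "hv - inner (gh k) (shcp k) - pv \<ge> 1/2 * (1 / nu k) * (norm (shcp k))\<^sup>2"
      using cd pv by simp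
    moreover have "1/2 * (1 / nu k) * (norm (shcp k))\<^sup>2 \<ge> 0" using nu_pos[of k] by simp
    ultimately have xi0: "hv - inner (gh k) (shcp k) - pv \<ge> 0" by linarith
    have c2: "psi (x k) (s k) \<noteq> \<infinity>"
    proof
      assume inf: "psi (x k) (s k) = \<infinity>"
      have "ereal (1 - th1) * xicp k \<le> - \<infinity>"
        using A4[of k] inf p0 by simp
      then show False using xi by simp
    qed
    show ?thesis using c1 c2 by simp
  qed
  have hfin: "\<And>k. h (x k) \<noteq> \<infinity>"
  proof -
    fix k show "h (x k) \<noteq> \<infinity>"
    proof (induction k)
      case 0 then show ?case using x0_dom by simp
    next
      case (Suc k)
      have "h (x k + s k) \<noteq> \<infinity>" using fin_step[OF Suc] khinf by blast
      then show ?case using Suc x_update[of k] by simp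
    qed
  qed
  have fs: "\<And>k. psi (x k) (shcp k) \<noteq> \<infinity>" "\<And>k. psi (x k) (s k) \<noteq> \<infinity>"
    using fin_step hfin by auto
  have hsfin: "\<And>k. h (x k + s k) \<noteq> \<infinity>" using fs(2) khinf by blast
  define hx where "hx k = real_of_ereal (h (x k))" for k
  define hs where "hs k = real_of_ereal (h (x k + s k))" for k
  define pc where "pc k = real_of_ereal (psi (x k) (shcp k))" for k
  define ps where "ps k = real_of_ereal (psi (x k) (s k))" for k
  have hxe: "\<And>k. h (x k) = ereal (hx k)" unfolding hx_def using hfin hninf by (metis ereal_fin_eq)
  have hse: "\<And>k. h (x k + s k) = ereal (hs k)" unfolding hs_def using hsfin hninf by (metis ereal_fin_eq)
  have pce: "\<And>k. psi (x k) (shcp k) = ereal (pc k)" unfolding pc_def using fs psininf by (metis ereal_fin_eq)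
  have pse: "\<And>k. psi (x k) (s k) = ereal (ps k)" unfolding ps_def using fs psininf by (metis ereal_fin_eq)
  have p0e: "\<And>k. psi (x k) 0 = ereal (hx k)" using psi_0 hxe by simp
  define xi where "xi k = hx k - inner (gh k) (shcp k) - pc k" for k
  have xie: "\<And>k. xicp k = ereal (xi k)"
    using xicp_def p0e pce unfolding phi_cp_def xi_def by simp
  have xi_ge: "\<And>k. xi k \<ge> 1/2 * (1 / nu k) * (norm (shcp k))\<^sup>2"
  proof -
    fix k
    have "ereal (fh0 k + inner (gh k) (shcp k) + 1/2 * (1 / nu k) * (norm (shcp k))\<^sup>2) + ereal (pc k)
        \<le> ereal (fh0 k) + ereal (hx k)"
      using cauchy_descent[of k] p0e[of k] pce[of k] unfolding m_cp_def phi_cp_def by simp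
    then show "xi k \<ge> 1/2 * (1 / nu k) * (norm (shcp k))\<^sup>2" unfolding xi_def by simp
  qed
  define D where "D k = hx k - inner (gh k) (s k) - 1/2 * inner (s k) (Bf (x k) *v s k) - ps k" for k
  have D_ge: "\<And>k. D k \<ge> (1 - th1) * xi k"
  proof -
    fix k
    have "ereal (fh0 k + inner (gh k) 0 + 1/2 * inner 0 (Bf (x k) *v 0)) + ereal (hx k)
        - (ereal (fh0 k + inner (gh k) (s k) + 1/2 * inner (s k) (Bf (x k) *v s k)) + ereal (ps k))
        \<ge> ereal (1 - th1) * ereal (xi k)"
      using A4[of k] p0e[of k] pse[of k] xie[of k] unfolding phi_m_def by simp
    then show "D k \<ge> (1 - th1) * xi k" unfolding D_def by simp
  qed
  define Nm where "Nm k = fh0 k + hx k - fh1 k - hs k" for k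
  have rho_eq: "\<And>k. rho k = Nm k / D k"
  proof -
    fix k
    show "rho k = Nm k / D k"
      using rho_def[of k] hxe[of k] hse[of k] p0e[of k] pse[of k]
      unfolding ratio_def phi_m_def Nm_def D_def by simp
  qed
  have D_lb: "\<And>k. D k \<ge> (1 - th1) / (2 * th1) * sigma k * (norm (shcp k))\<^sup>2"
  proof -
    fix k
    have n2: "(norm (shcp k))\<^sup>2 \<ge> 0" by simp
    have "1/2 * (1 / nu k) * (norm (shcp k))\<^sup>2 \<ge> 1/2 * (sigma k / th1) * (norm (shcp k))\<^sup>2"
      using invnu_ge[of k] n2 by (intro mult_right_mono) auto
    then have "xi k \<ge> 1/2 * (sigma k / th1) * (norm (shcp k))\<^sup>2" using xi_ge[of k] by linarith
    then have "(1 - th1) * xi k \<ge> (1 - th1) * (1/2 * (sigma k / th1) * (norm (shcp k))\<^sup>2)"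
      using params by (intro mult_left_mono) auto
    moreover have "(1 - th1) * (1/2 * (sigma k / th1) * (norm (shcp k))\<^sup>2)
        = (1 - th1) / (2 * th1) * sigma k * (norm (shcp k))\<^sup>2" by (simp add: field_simps)
    ultimately show "D k \<ge> (1 - th1) / (2 * th1) * sigma k * (norm (shcp k))\<^sup>2" using D_ge[of k] by linarith
  qed
  have s2: "\<And>k. (norm (s k))\<^sup>2 \<le> th2\<^sup>2 * (norm (shcp k))\<^sup>2"
  proof -
    fix k
    have "(norm (s k))\<^sup>2 \<le> (th2 * norm (shcp k))\<^sup>2" using s_le[of k] by (intro power_mono) auto
    then show "(norm (s k))\<^sup>2 \<le> th2\<^sup>2 * (norm (shcp k))\<^sup>2" by (simp add: power_mult_distrib)
  qed
  have D0: "\<And>k. s k = 0 \<Longrightarrow> D k = 0" unfolding D_def ps_def hx_def using psi_0 by simp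
  have s0: "\<And>k. s k = 0 \<Longrightarrow> shcp k = 0"
  proof -
    fix k assume sk: "s k = 0"
    define cc where "cc = (1 - th1) / (2 * th1) * sigma k"
    have c: "cc > 0" unfolding cc_def using params sig_ge[of k] sigmin0 by simp
    have "cc * (norm (shcp k))\<^sup>2 \<le> 0" using D_lb[of k] D0[OF sk] unfolding cc_def by linarith
    then have "(norm (shcp k))\<^sup>2 \<le> 0" using c by (simp add: mult_le_0_iff)
    then show "shcp k = 0" by simp
  qed
  define C where "C = 2 * kf + L / 2 + kg + kB / 2 + kh"
  have C0: "C > 0" unfolding C_def using params L0 kB0 kh0 by simp
  have ND: "\<And>k. \<bar>Nm k - D k\<bar> \<le> C * (norm (s k))\<^sup>2"
  proof -
    fix k
    let ?n = "(norm (s k))\<^sup>2"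
    have e1: "\<bar>f (x k) - fh0 k\<bar> \<le> kf * ?n" by (rule A6(1))
    have e2: "\<bar>f (x k + s k) - fh1 k\<bar> \<le> kf * ?n" by (rule A6(2))
    have e3: "\<bar>f (x k + s k) - f (x k) - inner (gradf (x k)) (s k)\<bar> \<le> L / 2 * ?n" by (rule Lf)
    have e4: "\<bar>inner (gradf (x k) - gh k) (s k)\<bar> \<le> kg * ?n"
    proof -
      have "\<bar>inner (gradf (x k) - gh k) (s k)\<bar> \<le> norm (gradf (x k) - gh k) * norm (s k)"
        by (rule Cauchy_Schwarz_ineq2)
      also have "\<dots> \<le> kg * norm (s k) * norm (s k)"
        using A6(3)[of k] by (intro mult_right_mono) auto
      finally show ?thesis by (simp add: power2_eq_square mult.assoc)
    qed
    have e5: "\<bar>inner (s k) (Bf (x k) *v s k)\<bar> \<le> kB * ?n" by (rule Bbound)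
    have e6: "\<bar>ps k - hs k\<bar> \<le> kh * ?n" using khb[OF fs(2)[of k]] unfolding ps_def hs_def by simp
    have eq: "Nm k - D k = (fh0 k - f (x k)) + (f (x k + s k) - fh1 k)
        - (f (x k + s k) - f (x k) - inner (gradf (x k)) (s k)) - inner (gradf (x k) - gh k) (s k)
        + 1/2 * inner (s k) (Bf (x k) *v s k) + (ps k - hs k)"
      unfolding Nm_def D_def by (simp add: inner_diff_left algebra_simps)
    show "\<bar>Nm k - D k\<bar> \<le> C * ?n"
      using e1 e2 e3 e4 e5 e6 unfolding eq C_def abs_le_iff by (simp add: algebra_simps)
  qed
  define F where "F k = f (x k) + hx k" for k
  have Flow: "\<And>k. F k \<ge> low"
  proof -
    fix k show "F k \<ge> low" using low[of "x k"] hxe[of k] unfolding F_def by simp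
  qed
  have Funs: "\<And>k. rho k < eta1 \<Longrightarrow> F (Suc k) = F k"
    unfolding F_def hx_def using x_update by simp
  have D_nn: "\<And>k. D k \<ge> 0"
  proof -
    fix k
    have "(1 - th1) / (2 * th1) * sigma k * (norm (shcp k))\<^sup>2 \<ge> 0"
      using params sig_ge[of k] sigmin0 by simp
    then show "D k \<ge> 0" using D_lb[of k] by linarith
  qed
  define b where "b = eta1 * (1 - th1) / (2 * th1)"
  define c0 where "c0 = b * sigmin - 2 * kf * th2\<^sup>2"
  have b0: "b > 0" unfolding b_def using params by simp
  have c00: "c0 > 0"
  proof -
    have pos: "eta1 * (1 - th1) > 0" using params by simp
    have "4 * kf * th1 * th2\<^sup>2 < sigmin * (eta1 * (1 - th1))"
      using params(13) pos by (simp add: pos_divide_less_eq)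
    moreover have "2 * kf * th2\<^sup>2 * (2 * th1) = 4 * kf * th1 * th2\<^sup>2" by simp
    ultimately have "2 * kf * th2\<^sup>2 * (2 * th1) < sigmin * (eta1 * (1 - th1))" by linarith
    then have "2 * kf * th2\<^sup>2 < sigmin * (eta1 * (1 - th1)) / (2 * th1)"
      using params by (subst pos_less_divide_eq) auto
    then show ?thesis unfolding c0_def b_def by (simp add: algebra_simps)
  qed
  have Fsucc: "\<And>k. rho k \<ge> eta1 \<Longrightarrow> F k - F (Suc k) \<ge> c0 * (norm (shcp k))\<^sup>2"
  proof -
    fix k assume succ: "rho k \<ge> eta1"
    let ?n = "(norm (s k))\<^sup>2" and ?m = "(norm (shcp k))\<^sup>2"
    have Dpos: "D k > 0"
    proof (rule ccontr)
      assume "\<not> D k > 0" then have "D k = 0" using D_nn[of k] by simp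
      then have "rho k = 0" using rho_eq[of k] by simp
      then show False using succ params by simp
    qed
    have NmD: "Nm k \<ge> eta1 * D k" using succ rho_eq[of k] Dpos by (simp add: pos_le_divide_eq)
    have Fs: "F (Suc k) = f (x k + s k) + hs k"
      unfolding F_def hx_def hs_def using x_update[of k] succ by simp
    have "F k - F (Suc k) \<ge> Nm k - 2 * kf * ?n"
      using A6(1)[of k] A6(2)[of k] Fs unfolding F_def Nm_def abs_le_iff by linarith
    moreover have "eta1 * D k \<ge> b * sigmin * ?m"
    proof -
      have "eta1 * D k \<ge> eta1 * ((1 - th1) / (2 * th1) * sigma k * ?m)"
        using D_lb[of k] params by (intro mult_left_mono) auto
      moreover have "eta1 * ((1 - th1) / (2 * th1) * sigma k * ?m) = b * sigma k * ?m"
        unfolding b_def by (simp add: field_simps)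
      moreover have "b * sigma k * ?m \<ge> b * sigmin * ?m"
        using b0 sig_ge[of k] by (intro mult_right_mono) auto
      ultimately show ?thesis by linarith
    qed
    moreover have "2 * kf * ?n \<le> 2 * kf * th2\<^sup>2 * ?m"
      using s2[of k] params by (simp add: mult_left_mono mult.assoc)
    ultimately show "F k - F (Suc k) \<ge> c0 * ?m" unfolding c0_def using NmD by (simp add: algebra_simps)
  qed
  have Fmono: "\<And>k. F (Suc k) \<le> F k"
  proof -
    fix k show "F (Suc k) \<le> F k"
    proof (cases "rho k \<ge> eta1")
      case True
      have "c0 * (norm (shcp k))\<^sup>2 \<ge> 0" using c00 by simp
      then show ?thesis using Fsucc[OF True] by linarith
    qed (use Funs in auto)
  qed
  have Fanti: "\<And>i j. i \<le> j \<Longrightarrow> F j \<le> F i"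
    using Fmono by (rule lift_Suc_antimono_le)
  define a where "a = (1 - th1) / (2 * th1 * th2\<^sup>2)"
  have a0: "a > 0" unfolding a_def using params by simp
  define sst where "sst = sigmin + C / (a * (1 - eta2))"
  have sst_ge: "sst \<ge> sigmin" unfolding sst_def using a0 C0 params by simp
  have vsucc: "\<And>k. s k \<noteq> 0 \<Longrightarrow> sigma k \<ge> sst \<Longrightarrow> rho k \<ge> eta2"
  proof -
    fix k assume snz: "s k \<noteq> 0" and sg: "sigma k \<ge> sst"
    let ?n = "(norm (s k))\<^sup>2" and ?m = "(norm (shcp k))\<^sup>2"
    have n0: "?n > 0" using snz by simp
    have Da: "D k \<ge> a * sigma k * ?n"
    proof -
      have th2p: "th2\<^sup>2 > 0" using params by simp
      have "?n / th2\<^sup>2 \<le> ?m" using s2[of k] th2p by (simp add: divide_le_eq mult.commute)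
      then have "(1 - th1) / (2 * th1) * sigma k * (?n / th2\<^sup>2) \<le> (1 - th1) / (2 * th1) * sigma k * ?m"
        using params sig_ge[of k] sigmin0 by (intro mult_left_mono) auto
      moreover have "(1 - th1) / (2 * th1) * sigma k * (?n / th2\<^sup>2) = a * sigma k * ?n"
        unfolding a_def by (simp add: field_simps)
      ultimately show ?thesis using D_lb[of k] by linarith
    qed
    have "a * sigma k * (1 - eta2) \<ge> C"
    proof -
      have p: "a * (1 - eta2) > 0" using a0 params by simp
      have "sigma k \<ge> C / (a * (1 - eta2))" using sg sst_def sigmin0 by simp
      then have "sigma k * (a * (1 - eta2)) \<ge> C" using p by (simp add: pos_divide_le_eq)
      then show ?thesis by (simp add: algebra_simps)
    qed
    then have "a * sigma k * (1 - eta2) * ?n \<ge> C * ?n" using n0 by (intro mult_right_mono) auto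
    moreover have "(1 - eta2) * D k \<ge> (1 - eta2) * (a * sigma k * ?n)"
      using Da params by (intro mult_left_mono) auto
    ultimately have "(1 - eta2) * D k \<ge> C * ?n" by (simp add: algebra_simps)
    then have NmD: "Nm k \<ge> eta2 * D k" using ND[of k] unfolding abs_le_iff by (simp add: algebra_simps)
    have Dpos: "D k > 0"
    proof -
      have "a * sigma k * ?n > 0" using a0 sig_ge[of k] sigmin0 n0 by simp
      then show ?thesis using Da by linarith
    qed
    show "rho k \<ge> eta2" using rho_eq[of k] NmD Dpos by (simp add: pos_le_divide_eq)
  qed
  have sig_upd_le: "\<And>k. sigma (Suc k) \<le> max (gam2 * sigma k) sigmin"
  proof -
    fix k
    obtain sg where sg: "(rho k \<ge> eta2 \<longrightarrow> gam3 * sigma k \<le> sg \<and> sg \<le> sigma k)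
       \<and> (eta1 \<le> rho k \<and> rho k < eta2 \<longrightarrow> sigma k \<le> sg \<and> sg \<le> gam1 * sigma k)
       \<and> (rho k < eta1 \<longrightarrow> gam1 * sigma k \<le> sg \<and> sg \<le> gam2 * sigma k)
       \<and> sigma (Suc k) = max sg sigmin" using sigma_update[of k] by blast
    have sk: "sigma k > 0" using sig_ge[of k] sigmin0 by linarith
    have "sigma k \<le> gam2 * sigma k" using params sk by simp
    moreover have "gam1 * sigma k \<le> gam2 * sigma k" using params sk by simp
    ultimately have "sg \<le> gam2 * sigma k" using sg by (cases "rho k \<ge> eta2"; cases "rho k \<ge> eta1") auto
    then show "sigma (Suc k) \<le> max (gam2 * sigma k) sigmin" using sg by simp
  qed
  have sig_upd_vs: "\<And>k. rho k \<ge> eta2 \<Longrightarrow> sigma (Suc k) \<le> sigma k"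
  proof -
    fix k assume r: "rho k \<ge> eta2"
    obtain sg where sg: "(rho k \<ge> eta2 \<longrightarrow> gam3 * sigma k \<le> sg \<and> sg \<le> sigma k)
       \<and> sigma (Suc k) = max sg sigmin" using sigma_update[of k] by blast
    then show "sigma (Suc k) \<le> sigma k" using r sig_ge[of k] by simp
  qed
  have sig_upd_uns: "\<And>k. rho k < eta1 \<Longrightarrow> sigma (Suc k) \<ge> gam1 * sigma k"
  proof -
    fix k assume r: "rho k < eta1"
    obtain sg where sg: "(rho k < eta1 \<longrightarrow> gam1 * sigma k \<le> sg \<and> sg \<le> gam2 * sigma k)
       \<and> sigma (Suc k) = max sg sigmin" using sigma_update[of k] by blast
    then show "sigma (Suc k) \<ge> gam1 * sigma k" using r by (simp add: le_max_iff_disj)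
  qed
  have core: "\<exists>k\<ge>K. (1 + 1 / nu k) * norm (shcp k) < eps" if eps: "eps > 0" for eps K
  proof (rule ccontr)
    assume "\<not> ?thesis"
    then have big: "\<And>k. k \<ge> K \<Longrightarrow> (1 + 1 / nu k) * norm (shcp k) \<ge> eps" by (meson not_le)
    have snz: "\<And>k. k \<ge> K \<Longrightarrow> s k \<noteq> 0"
    proof
      fix k assume "k \<ge> K" "s k = 0"
      then show False using big[of k] s0[of k] eps by simp
    qed
    define Sig where "Sig = max (sigma K) (gam2 * sst)"
    have sigbd: "sigma k \<le> Sig" if kK: "k \<ge> K" for k
      using kK
    proof (induction k rule: dec_induct)
      case base then show ?case unfolding Sig_def by simp
    next
      case (step n)
      show ?case
      proof (cases "sigma n \<ge> sst")
        case True
        then have "rho n \<ge> eta2" using vsucc snz step.hyps(1) by blast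
        then show ?thesis using sig_upd_vs[of n] step.IH by linarith
      next
        case False
        have "gam2 * sigma n \<le> gam2 * sst" using False params by (intro mult_left_mono) auto
        moreover have "sst \<le> gam2 * sst" using params sst_ge sigmin0 by simp
        ultimately show ?thesis using sig_upd_le[of n] sst_ge unfolding Sig_def by linarith
      qed
    qed
    define R where "R = 1 + (kB + Sig) / th1"
    have R0: "R > 0"
    proof -
      have "Sig \<ge> 0" unfolding Sig_def using sig_ge[of K] sigmin0 by simp
      then have "(kB + Sig) / th1 \<ge> 0" using kB0 params by (intro divide_nonneg_pos) auto
      then show ?thesis unfolding R_def by linarith
    qed
    define e' where "e' = eps / R"
    have e'0: "e' > 0" unfolding e'_def using eps R0 by simp
    have shlb: "norm (shcp k) \<ge> e'" if kK: "k \<ge> K" for k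
    proof -
      have "1 / nu k \<le> (kB + Sig) / th1"
        using invnu_le[of k] sigbd[OF kK] params by (smt (verit) divide_right_mono)
      then have "1 + 1 / nu k \<le> R" unfolding R_def by simp
      then have "(1 + 1 / nu k) * norm (shcp k) \<le> R * norm (shcp k)" by (intro mult_right_mono) auto
      then have "eps \<le> R * norm (shcp k)" using big[OF kK] by linarith
      then show ?thesis unfolding e'_def using R0 by (simp add: divide_le_eq mult.commute)
    qed
    define dl where "dl = c0 * e'\<^sup>2"
    have dl0: "dl > 0" unfolding dl_def using c00 e'0 by simp
    have dec: "F (Suc k) \<le> F k - dl" if kK: "k \<ge> K" and r: "rho k \<ge> eta1" for k
    proof -
      have "e'\<^sup>2 \<le> (norm (shcp k))\<^sup>2" using shlb[OF kK] e'0 by (intro power_mono) auto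
      then have "dl \<le> c0 * (norm (shcp k))\<^sup>2" unfolding dl_def using c00 by (intro mult_left_mono) auto
      then show ?thesis using Fsucc[OF r] by linarith
    qed
    have exs: "\<exists>j\<ge>k. rho j \<ge> eta1" if kK: "k \<ge> K" for k
    proof (rule ccontr)
      assume "\<not> ?thesis"
      then have uns: "\<And>j. j \<ge> k \<Longrightarrow> rho j < eta1" by (meson not_le)
      have grow: "sigma (k + m) \<ge> gam1 ^ m * sigma k" for m
      proof (induction m)
        case 0 then show ?case by simp
      next
        case (Suc m)
        have "sigma (Suc (k + m)) \<ge> gam1 * sigma (k + m)" using uns[of "k + m"] sig_upd_uns by simp
        moreover have "gam1 * sigma (k + m) \<ge> gam1 * (gam1 ^ m * sigma k)"
          using Suc params by (intro mult_left_mono) auto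
        ultimately show ?case by simp
      qed
      obtain m where m: "Sig / sigmin < gam1 ^ m" using real_arch_pow params(5) by blast
      have "Sig < gam1 ^ m * sigmin" using m sigmin0 by (simp add: divide_less_eq)
      also have "\<dots> \<le> gam1 ^ m * sigma k" using sig_ge[of k] params by (intro mult_left_mono) auto
      also have "\<dots> \<le> sigma (k + m)" by (rule grow)
      also have "\<dots> \<le> Sig" using sigbd[of "k + m"] kK by simp
      finally show False by simp
    qed
    have desc: "\<exists>k\<ge>K. F k \<le> F K - real n * dl" for n
    proof (induction n)
      case 0 then show ?case by auto
    next
      case (Suc n)
      then obtain k where k: "k \<ge> K" "F k \<le> F K - real n * dl" by blast
      obtain j where j: "j \<ge> k" "rho j \<ge> eta1" using exs[OF k(1)] by blast
      have "F (Suc j) \<le> F j - dl" using dec[of j] j k(1) by simp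
      moreover have "F j \<le> F k" using Fanti[OF j(1)] .
      ultimately have "F (Suc j) \<le> F K - real (Suc n) * dl" using k(2) by (simp add: algebra_simps)
      moreover have "Suc j \<ge> K" using j k by simp
      ultimately show ?case by blast
    qed
    obtain n where n: "F K - low < real n * dl" using reals_Archimedean3[OF dl0] by blast
    obtain k where "k \<ge> K" "F k \<le> F K - real n * dl" using desc by blast
    then show False using n Flow[of k] by linarith
  qed
  define Am where "Am k = argmin_set (m_cp (fh0 k) (gh k) (psi (x k)) (1 / nu k))" for k
  define In where "In k = Inf (norm ` Am k)" for k
  have In_le: "\<And>k. In k \<le> norm (shcp k) / ks"
  proof -
    fix k
    have "ks * In k \<le> norm (shcp k)" using ksb[of k] unfolding In_def Am_def .
    then show "In k \<le> norm (shcp k) / ks" using ks0 by (simp add: pos_le_divide_eq mult.commute)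
  qed
  have exc: "\<forall>k. \<exists>c. c \<in> Am k \<and> norm c < In k + nu k / (real k + 1)"
  proof
    fix k
    have ne: "norm ` Am k \<noteq> {}" using ksne[of k] unfolding Am_def by simp
    have "In k < In k + nu k / (real k + 1)" using nu_pos[of k] by simp
    then obtain z where "z \<in> norm ` Am k" "z < In k + nu k / (real k + 1)"
      using cInf_lessD[OF ne] unfolding In_def by blast
    then show "\<exists>c. c \<in> Am k \<and> norm c < In k + nu k / (real k + 1)" by blast
  qed
  obtain scp where scp: "\<And>k. scp k \<in> Am k \<and> norm (scp k) < In k + nu k / (real k + 1)"
    using choice[OF exc] by blast
  have scp_min: "\<And>k t. m_cp (fh0 k) (gh k) (psi (x k)) (1 / nu k) (scp k)
                     \<le> m_cp (fh0 k) (gh k) (psi (x k)) (1 / nu k) t"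
    using scp unfolding Am_def argmin_set_def by blast
  have w_mem: "\<And>k. - gh k - (1 / nu k) *\<^sub>R scp k \<in> limiting_subdiff (psi (x k)) (scp k)"
  proof -
    fix k
    have m0: "ereal (fh0 k + inner (gh k) (scp k) + 1/2 * (1 / nu k) * (norm (scp k))\<^sup>2) + psi (x k) (scp k)
        \<le> ereal (fh0 k) + ereal (hx k)"
      using scp_min[of k 0] p0e[of k] unfolding m_cp_def phi_cp_def by simp
    have "psi (x k) (scp k) \<noteq> \<infinity>"
    proof
      assume "psi (x k) (scp k) = \<infinity>" then show False using m0 by simp
    qed
    then have pe: "psi (x k) (scp k) = ereal (real_of_ereal (psi (x k) (scp k)))"
      using psininf by (metis ereal_fin_eq)
    show "- gh k - (1 / nu k) *\<^sub>R scp k \<in> limiting_subdiff (psi (x k)) (scp k)"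
    proof (rule argmin_subdiff[where a="1 / nu k" and c="fh0 k" and g="gh k" and s="scp k" and ps="psi (x k)", OF _ _ pe])
      show "0 < 1 / nu k" using nu_pos[of k] by simp
      fix t
      show "ereal (fh0 k + inner (gh k) (scp k) + 1/2 * (1 / nu k) * (norm (scp k))\<^sup>2) + psi (x k) (scp k)
          \<le> ereal (fh0 k + inner (gh k) t + 1/2 * (1 / nu k) * (norm t)\<^sup>2) + psi (x k) t"
        using scp_min[of k t] unfolding m_cp_def phi_cp_def by simp
    qed
  qed
  define u where "u k = gradf (x k) - gh k - (1 / nu k) *\<^sub>R scp k" for k
  have u_mem: "\<And>k. u k \<in> (\<lambda>w. gradf (x k) + w) ` limiting_subdiff (psi (x k)) (scp k)"
  proof -
    fix k
    have "u k = gradf (x k) + (- gh k - (1 / nu k) *\<^sub>R scp k)" unfolding u_def by (simp add: algebra_simps)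
    then show "u k \<in> (\<lambda>w. gradf (x k) + w) ` limiting_subdiff (psi (x k)) (scp k)"
      using w_mem[of k] by blast
  qed
  have nu_le: "\<And>k. nu k \<le> th1 / sigmin"
  proof -
    fix k
    have "spec_norm (Bf (x k)) + sigma k \<ge> sigmin" using sn0[of k] sig_ge[of k] by linarith
    then show "nu k \<le> th1 / sigmin" using nu_def[of k] params sigmin0
      by (simp add: divide_left_mono)
  qed
  have scp_le: "\<And>k. norm (scp k) \<le> norm (shcp k) / ks + nu k / (real k + 1)"
    using scp In_le by (meson add_le_cancel_right le_less_trans less_imp_le not_le)
  have u_le: "\<And>k. norm (u k) \<le> kg * (th2 * norm (shcp k)) + (1 / nu k) * (norm (shcp k) / ks) + 1 / (real k + 1)"
  proof -
    fix k
    have "norm (u k) \<le> norm (gradf (x k) - gh k) + norm ((1 / nu k) *\<^sub>R scp k)"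
      unfolding u_def by (rule norm_triangle_ineq4)
    also have "norm ((1 / nu k) *\<^sub>R scp k) = (1 / nu k) * norm (scp k)" using nu_pos[of k] by simp
    also have "(1 / nu k) * norm (scp k) \<le> (1 / nu k) * (norm (shcp k) / ks + nu k / (real k + 1))"
      using scp_le[of k] nu_pos[of k] by (intro mult_left_mono) auto
    also have "(1 / nu k) * (norm (shcp k) / ks + nu k / (real k + 1))
        = (1 / nu k) * (norm (shcp k) / ks) + 1 / (real k + 1)"
    proof -
      have "(1 / nu k) * (nu k / (real k + 1)) = 1 / (real k + 1)" using nu_pos[of k] by simp
      then show ?thesis by (simp only: distrib_left)
    qed
    also have "norm (gradf (x k) - gh k) \<le> kg * (th2 * norm (shcp k))"
      using A6(3)[of k] s_le[of k] params by (meson mult_left_mono order_trans less_imp_le)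
    finally show "norm (u k) \<le> kg * (th2 * norm (shcp k)) + (1 / nu k) * (norm (shcp k) / ks) + 1 / (real k + 1)"
      by linarith
  qed
  define Q where "Q k = norm (shcp k) + norm (scp k) + norm (s k) + norm (u k)" for k
  define M where "M = 1 + 1 / ks + th2 + kg * th2"
  define M2 where "M2 = th1 / sigmin + 1"
  have M0: "M > 0" unfolding M_def using ks0 params by (simp add: add_pos_pos)
  have M20: "M2 > 0" unfolding M2_def using params sigmin0 by (simp add: add_pos_pos)
  have Q_le: "\<And>k. Q k \<le> M * ((1 + 1 / nu k) * norm (shcp k)) + M2 / (real k + 1)"
  proof -
    fix k
    define A where "A = norm (shcp k)"
    define V where "V = 1 / nu k"
    have A0: "A \<ge> 0" unfolding A_def by simp
    have V0: "V \<ge> 0" unfolding V_def using nu_pos[of k] by simp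
    have VA: "V * A \<ge> 0" using A0 V0 by simp
    have Mks: "M \<ge> 1 / ks" unfolding M_def using params ks0 by simp
    have t1: "M * (V * A) \<ge> (1 / ks) * (V * A)" using Mks VA by (rule mult_right_mono)
    have t2: "V * (A / ks) = (1 / ks) * (V * A)" by simp
    have t3: "nu k / (real k + 1) \<le> (th1 / sigmin) / (real k + 1)"
      using nu_le[of k] by (intro divide_right_mono) auto
    have t4: "M2 / (real k + 1) = (th1 / sigmin) / (real k + 1) + 1 / (real k + 1)"
      unfolding M2_def by (simp add: add_divide_distrib)
    have t5: "M * ((1 + V) * A) = (1 + 1 / ks + th2 + kg * th2) * A + M * (V * A)"
      unfolding M_def by (simp add: algebra_simps)
    have t6: "A / ks = (1 / ks) * A" by simp
    have t7: "(1 + 1 / ks + th2 + kg * th2) * A = A + (1 / ks) * A + th2 * A + kg * (th2 * A)"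
      by (simp add: algebra_simps)
    have "Q k \<le> A + (A / ks + nu k / (real k + 1)) + th2 * A + (kg * (th2 * A) + V * (A / ks) + 1 / (real k + 1))"
      unfolding Q_def A_def V_def using scp_le[of k] s_le[of k] u_le[of k] by linarith
    then have "Q k \<le> M * ((1 + V) * A) + M2 / (real k + 1)"
      using t1 t2 t3 t4 t5 t6 t7 by linarith
    then show "Q k \<le> M * ((1 + 1 / nu k) * norm (shcp k)) + M2 / (real k + 1)"
      unfolding A_def V_def .
  qed
  have Qsmall: "\<exists>k\<ge>K. Q k < e" if e: "e > 0" for e K
  proof -
    obtain n :: nat where n: "2 * M2 / e < real n" using reals_Archimedean2 by blast
    obtain k where k: "k \<ge> max K n" "(1 + 1 / nu k) * norm (shcp k) < e / (2 * M)"
      using core[of "e / (2 * M)" "max K n"] e M0 by auto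
    have "M * ((1 + 1 / nu k) * norm (shcp k)) < M * (e / (2 * M))"
      using k(2) M0 by (intro mult_strict_left_mono) auto
    also have "M * (e / (2 * M)) = e / 2" using M0 by simp
    finally have q1: "M * ((1 + 1 / nu k) * norm (shcp k)) < e / 2" .
    have "2 * M2 / e < real k + 1" using n k(1) by simp
    then have "2 * M2 < (real k + 1) * e" using e by (simp add: divide_less_eq)
    moreover have "e / 2 * (real k + 1) = ((real k + 1) * e) / 2" by simp
    ultimately have "M2 < e / 2 * (real k + 1)" by linarith
    then have q2: "M2 / (real k + 1) < e / 2" by (simp add: pos_divide_less_eq)
    have "k \<ge> K" using k(1) by simp
    moreover have "Q k < e" using q1 q2 Q_le[of k] by linarith
    ultimately show ?thesis by blast
  qed
  obtain N where N: "infinite N" "\<forall>e>0. \<exists>K. \<forall>k\<in>N. k \<ge> K \<longrightarrow> Q k < e"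
    using select_subseq[of Q] Qsmall by blast
  have Qge: "\<And>k. norm (shcp k) \<le> Q k" "\<And>k. norm (scp k) \<le> Q k" "\<And>k. norm (s k) \<le> Q k" "\<And>k. norm (u k) \<le> Q k"
    unfolding Q_def by auto
  show ?thesis
  proof (intro exI conjI)
    show "infinite N" by (rule N(1))
    show "\<forall>k\<in>N. scp k \<in> argmin_set (m_cp (fh0 k) (gh k) (psi (x k)) (1 / nu k))
           \<and> u k \<in> (\<lambda>w. gradf (x k) + w) ` limiting_subdiff (psi (x k)) (scp k)"
      using scp u_mem unfolding Am_def by blast
    show "(shcp \<longlongrightarrow> 0) (inf sequentially (principal N))" using N(2) Qge(1) by (rule tendsto_from_Q)
    show "(scp \<longlongrightarrow> 0) (inf sequentially (principal N))" using N(2) Qge(2) by (rule tendsto_from_Q)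
    show "(s \<longlongrightarrow> 0) (inf sequentially (principal N))" using N(2) Qge(3) by (rule tendsto_from_Q)
    show "(u \<longlongrightarrow> 0) (inf sequentially (principal N))" using N(2) Qge(4) by (rule tendsto_from_Q)
  qed
qed

end
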